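(* Let $R$ be a ring, $M$ a nonzero left $R$-module, $\Omega$ an infinite set, and $E=\mathrm{End}_R(\bigoplus_{i\in\Omega}M)$ or $E=\mathrm{End}_R(\prod_{i\in\Omega}M)$. Suppose that $(R_i)_{i\in I}$ is a chain (totally ordered by inclusion) of subrings of $E$ such that $\bigcup_{i\in I}R_i=E$ and $|I|\le|\Omega|$. Then $E=R_i$ for some $i\in I$. In other words, $E$ is not the union of a chain of at most $|\Omega|$ proper subrings.
   Context: Rings are unital and associative; subrings of $E$ are understood as subrings of the ring $E$ (closed under addition, negation and multiplication and containing $0$ and $1$). *)

theory Defs
  imports "HOL-Algebra.Module" "HOL-Algebra.Subrings"
begin

text \<open>The library locale module requires a commutative ring, so we define
  the general notion with the same axioms but only assuming ring R.\<close>

locale left_module = R?: ring R + M?: abelian_group M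
  for R :: "('r, 'e) ring_scheme" (structure) and M :: "('r, 'm) module" (structure) +
  assumes smult_closed:
      "\<lbrakk> a \<in> carrier R; x \<in> carrier M \<rbrakk> \<Longrightarrow> a \<odot>\<^bsub>M\<^esub> x \<in> carrier M"
    and smult_l_distr:
      "\<lbrakk> a \<in> carrier R; b \<in> carrier R; x \<in> carrier M \<rbrakk> \<Longrightarrow>
      (a \<oplus> b) \<odot>\<^bsub>M\<^esub> x = a \<odot>\<^bsub>M\<^esub> x \<oplus>\<^bsub>M\<^esub> b \<odot>\<^bsub>M\<^esub> x"
    and smult_r_distr:
      "\<lbrakk> a \<in> carrier R; x \<in> carrier M; y \<in> carrier M \<rbrakk> \<Longrightarrow>
      a \<odot>\<^bsub>M\<^esub> (x \<oplus>\<^bsub>M\<^esub> y) = a \<odot>\<^bsub>M\<^esub> x \<oplus>\<^bsub>M\<^esub> a \<odot>\<^bsub>M\<^esub> y"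
    and smult_assoc1:
      "\<lbrakk> a \<in> carrier R; b \<in> carrier R; x \<in> carrier M \<rbrakk> \<Longrightarrow>
      (a \<otimes> b) \<odot>\<^bsub>M\<^esub> x = a \<odot>\<^bsub>M\<^esub> (b \<odot>\<^bsub>M\<^esub> x)"
    and smult_one:
      "x \<in> carrier M \<Longrightarrow> \<one> \<odot>\<^bsub>M\<^esub> x = x"

text \<open>Only the additive group and the scalar multiplication are meaningful;
  the ring-multiplication fields of the record are irrelevant.\<close>

definition direct_sum_mod :: "'o set \<Rightarrow> ('r, 'm) module \<Rightarrow> ('r, 'o \<Rightarrow> 'm) module" where
  "direct_sum_mod \<Omega> M =
    \<lparr> carrier = {f \<in> \<Omega> \<rightarrow>\<^sub>E carrier M. finite {i \<in> \<Omega>. f i \<noteq> \<zero>\<^bsub>M\<^esub>}},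
      mult = undefined, one = undefined,
      zero = (\<lambda>i\<in>\<Omega>. \<zero>\<^bsub>M\<^esub>),
      add = (\<lambda>f g. \<lambda>i\<in>\<Omega>. f i \<oplus>\<^bsub>M\<^esub> g i),
      smult = (\<lambda>r f. \<lambda>i\<in>\<Omega>. r \<odot>\<^bsub>M\<^esub> f i) \<rparr>"

definition direct_prod_mod :: "'o set \<Rightarrow> ('r, 'm) module \<Rightarrow> ('r, 'o \<Rightarrow> 'm) module" where
  "direct_prod_mod \<Omega> M =
    \<lparr> carrier = \<Omega> \<rightarrow>\<^sub>E carrier M,
      mult = undefined, one = undefined,
      zero = (\<lambda>i\<in>\<Omega>. \<zero>\<^bsub>M\<^esub>),
      add = (\<lambda>f g. \<lambda>i\<in>\<Omega>. f i \<oplus>\<^bsub>M\<^esub> g i),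
      smult = (\<lambda>r f. \<lambda>i\<in>\<Omega>. r \<odot>\<^bsub>M\<^esub> f i) \<rparr>"

definition module_endos :: "('r, 'e) ring_scheme \<Rightarrow> ('r, 'n) module \<Rightarrow> ('n \<Rightarrow> 'n) set" where
  "module_endos R N =
    {\<phi>. \<phi> \<in> carrier N \<rightarrow>\<^sub>E carrier N \<and>
         (\<forall>x\<in>carrier N. \<forall>y\<in>carrier N. \<phi> (x \<oplus>\<^bsub>N\<^esub> y) = \<phi> x \<oplus>\<^bsub>N\<^esub> \<phi> y) \<and>
         (\<forall>r\<in>carrier R. \<forall>x\<in>carrier N. \<phi> (r \<odot>\<^bsub>N\<^esub> x) = r \<odot>\<^bsub>N\<^esub> \<phi> x)}"

definition End_ring :: "('r, 'e) ring_scheme \<Rightarrow> ('r, 'n) module \<Rightarrow> ('n \<Rightarrow> 'n) ring" where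
  "End_ring R N =
    \<lparr> carrier = module_endos R N,
      mult = (\<lambda>\<phi> \<psi>. compose (carrier N) \<phi> \<psi>),
      one = (\<lambda>x\<in>carrier N. x),
      zero = (\<lambda>x\<in>carrier N. \<zero>\<^bsub>N\<^esub>),
      add = (\<lambda>\<phi> \<psi>. \<lambda>x\<in>carrier N. \<phi> x \<oplus>\<^bsub>N\<^esub> \<psi> x) \<rparr>"

end

theory Submission
  imports Defs
begin

context left_module begin
lemma smult_zero: "a \<in> carrier R \<Longrightarrow> a \<odot>\<^bsub>M\<^esub> \<zero>\<^bsub>M\<^esub> = \<zero>\<^bsub>M\<^esub>"
  by (metis M.add.l_cancel_one M.zero_closed smult_closed smult_r_distr)
lemma idem_zero: "x \<in> carrier M \<Longrightarrow> x = x \<oplus>\<^bsub>M\<^esub> x \<Longrightarrow> x = \<zero>\<^bsub>M\<^esub>"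
  by simp
end

locale blk = left_module R M for R :: "('r, 'e) ring_scheme" and M :: "('r, 'm) module" +
  fixes Om :: "'o set" and I :: "'j set" and g :: "'j \<times> 'o \<Rightarrow> 'o" and fin :: bool
    and N :: "('r, 'o \<Rightarrow> 'm) module"
  assumes g_inj: "inj_on g (I \<times> Om)" and g_into: "g ` (I \<times> Om) \<subseteq> Om"
    and N_carrier: "carrier N = {f \<in> Om \<rightarrow>\<^sub>E carrier M. fin \<longrightarrow> finite {i\<in>Om. f i \<noteq> \<zero>\<^bsub>M\<^esub>}}"
    and N_zero: "zero N = (\<lambda>i\<in>Om. \<zero>\<^bsub>M\<^esub>)"
    and N_add: "add N = (\<lambda>f g. \<lambda>i\<in>Om. f i \<oplus>\<^bsub>M\<^esub> g i)"
    and N_smult: "smult N = (\<lambda>r f. \<lambda>i\<in>Om. r \<odot>\<^bsub>M\<^esub> f i)"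
begin

definition pj where "pj j = (\<lambda>w\<in>carrier N. \<lambda>x\<in>Om. w (g (j, x)))"
definition qj where "qj j = (\<lambda>v\<in>carrier N. \<lambda>x\<in>Om.
   if x \<in> g ` ({j} \<times> Om) then v (snd (the_inv_into (I \<times> Om) g x)) else \<zero>\<^bsub>M\<^esub>)"
definition Dg where "Dg y = (\<lambda>v\<in>carrier N. \<lambda>x\<in>Om.
   if x \<in> g ` (I \<times> Om) then (case the_inv_into (I \<times> Om) g x of (j, z) \<Rightarrow> y j (pj j v) z)
   else \<zero>\<^bsub>M\<^esub>)"

lemma inv_g: "j \<in> I \<Longrightarrow> z \<in> Om \<Longrightarrow> the_inv_into (I \<times> Om) g (g (j, z)) = (j, z)"
  using g_inj by (simp add: the_inv_into_f_f)

lemma g_in: "j \<in> I \<Longrightarrow> z \<in> Om \<Longrightarrow> g (j, z) \<in> Om"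
  using g_into by auto

lemma add_eq: "x \<oplus>\<^bsub>N\<^esub> y = (\<lambda>i\<in>Om. x i \<oplus>\<^bsub>M\<^esub> y i)"
  by (simp add: N_add)
lemma smult_eq: "r \<odot>\<^bsub>N\<^esub> y = (\<lambda>i\<in>Om. r \<odot>\<^bsub>M\<^esub> y i)"
  by (simp add: N_smult)

lemma Nc_fun: "v \<in> carrier N \<Longrightarrow> i \<in> Om \<Longrightarrow> v i \<in> carrier M"
  using N_carrier by auto
lemma Nc_ext: "v \<in> carrier N \<Longrightarrow> i \<notin> Om \<Longrightarrow> v i = undefined"
  using N_carrier by auto
lemma Nc_fin: "v \<in> carrier N \<Longrightarrow> fin \<Longrightarrow> finite {i\<in>Om. v i \<noteq> \<zero>\<^bsub>M\<^esub>}"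
  using N_carrier by auto

lemma Nc_intro: "f \<in> extensional Om \<Longrightarrow> (\<And>i. i \<in> Om \<Longrightarrow> f i \<in> carrier M) \<Longrightarrow>
   (fin \<Longrightarrow> finite {i\<in>Om. f i \<noteq> \<zero>\<^bsub>M\<^esub>}) \<Longrightarrow> f \<in> carrier N"
  unfolding N_carrier by (auto simp: PiE_iff)

lemma add_closed_N: "x \<in> carrier N \<Longrightarrow> y \<in> carrier N \<Longrightarrow> x \<oplus>\<^bsub>N\<^esub> y \<in> carrier N"
proof -
  assume x: "x \<in> carrier N" and y: "y \<in> carrier N"
  have "{i\<in>Om. x i \<oplus>\<^bsub>M\<^esub> y i \<noteq> \<zero>\<^bsub>M\<^esub>} \<subseteq> {i\<in>Om. x i \<noteq> \<zero>\<^bsub>M\<^esub>} \<union> {i\<in>Om. y i \<noteq> \<zero>\<^bsub>M\<^esub>}"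
    using Nc_fun[OF x] Nc_fun[OF y] by auto
  then show ?thesis unfolding add_eq
    by (intro Nc_intro) (use Nc_fin[OF x] Nc_fin[OF y] Nc_fun[OF x] Nc_fun[OF y] in \<open>auto intro: finite_subset\<close>)
qed

lemma endo_zero: "\<phi> \<in> module_endos R N \<Longrightarrow> \<phi> (zero N) = zero N"
proof -
  assume phi: "\<phi> \<in> module_endos R N"
  have z: "zero N \<in> carrier N" by (rule Nc_intro) (auto simp: N_zero)
  have zz: "zero N \<oplus>\<^bsub>N\<^esub> zero N = zero N" unfolding add_eq N_zero by (rule restrict_ext) simp
  have pz: "\<phi> (zero N) \<in> carrier N" using phi z unfolding module_endos_def by blast
  have hom: "\<And>x y. x \<in> carrier N \<Longrightarrow> y \<in> carrier N \<Longrightarrow> \<phi> (x \<oplus>\<^bsub>N\<^esub> y) = \<phi> x \<oplus>\<^bsub>N\<^esub> \<phi> y"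
    using phi unfolding module_endos_def by blast
  have eq: "\<phi> (zero N) = \<phi> (zero N) \<oplus>\<^bsub>N\<^esub> \<phi> (zero N)"
    using hom[OF z z] unfolding zz .
  have pt: "\<phi> (zero N) i = \<zero>\<^bsub>M\<^esub>" if i: "i \<in> Om" for i
  proof -
    from eq have "\<phi> (zero N) i = (\<phi> (zero N) \<oplus>\<^bsub>N\<^esub> \<phi> (zero N)) i" by (rule fun_cong)
    also have "\<dots> = \<phi> (zero N) i \<oplus>\<^bsub>M\<^esub> \<phi> (zero N) i" by (simp add: add_eq i)
    finally show ?thesis using idem_zero Nc_fun[OF pz i] by blast
  qed
  show ?thesis
  proof (rule ext)
    fix i show "\<phi> (zero N) i = zero N i"
      using pt[of i] Nc_ext[OF pz, of i] by (cases "i \<in> Om") (simp_all add: N_zero)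
  qed
qed

lemma smult_closed_N: "r \<in> carrier R \<Longrightarrow> y \<in> carrier N \<Longrightarrow> r \<odot>\<^bsub>N\<^esub> y \<in> carrier N"
proof -
  assume r: "r \<in> carrier R" and y: "y \<in> carrier N"
  have "{i\<in>Om. r \<odot>\<^bsub>M\<^esub> y i \<noteq> \<zero>\<^bsub>M\<^esub>} \<subseteq> {i\<in>Om. y i \<noteq> \<zero>\<^bsub>M\<^esub>}"
    using smult_zero[OF r] by auto
  then show ?thesis unfolding smult_eq
    by (intro Nc_intro) (use Nc_fin[OF y] Nc_fun[OF y] smult_closed[OF r] in \<open>auto intro: finite_subset\<close>)
qed


lemma pj_app: "w \<in> carrier N \<Longrightarrow> pj j w = (\<lambda>x\<in>Om. w (g (j, x)))"
  by (simp add: pj_def)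

lemma pj_closed: "j \<in> I \<Longrightarrow> w \<in> carrier N \<Longrightarrow> pj j w \<in> carrier N"
proof -
  assume j: "j \<in> I" and w: "w \<in> carrier N"
  have inj: "inj_on (\<lambda>x. g (j, x)) Om" using g_inj j by (auto simp: inj_on_def)
  have eq: "{x\<in>Om. w (g (j, x)) \<noteq> \<zero>\<^bsub>M\<^esub>} = (\<lambda>x. g (j, x)) -` {i\<in>Om. w i \<noteq> \<zero>\<^bsub>M\<^esub>} \<inter> Om"
    using g_in[OF j] by auto
  show ?thesis unfolding pj_app[OF w]
  proof (rule Nc_intro)
    show "(\<lambda>x\<in>Om. w (g (j, x))) \<in> extensional Om" by simp
    fix i assume "i \<in> Om" then show "(\<lambda>x\<in>Om. w (g (j, x))) i \<in> carrier M"
      using Nc_fun[OF w] g_in[OF j] by simp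
  next
    assume fin
    then have "finite ((\<lambda>x. g (j, x)) -` {i\<in>Om. w i \<noteq> \<zero>\<^bsub>M\<^esub>} \<inter> Om)"
      using finite_vimage_IntI[OF _ inj] Nc_fin[OF w] by blast
    moreover have "{i\<in>Om. (\<lambda>x\<in>Om. w (g (j, x))) i \<noteq> \<zero>\<^bsub>M\<^esub>} = (\<lambda>x. g (j, x)) -` {i\<in>Om. w i \<noteq> \<zero>\<^bsub>M\<^esub>} \<inter> Om"
      using g_in[OF j] by auto
    ultimately show "finite {i\<in>Om. (\<lambda>x\<in>Om. w (g (j, x))) i \<noteq> \<zero>\<^bsub>M\<^esub>}"
      by (simp only:)
  qed
qed

lemma pj_endo: "j \<in> I \<Longrightarrow> pj j \<in> module_endos R N"
  unfolding module_endos_def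
proof (intro CollectI conjI ballI)
  assume j: "j \<in> I"
  show "pj j \<in> carrier N \<rightarrow>\<^sub>E carrier N" using pj_closed[OF j] by (auto simp: pj_def)
  fix x y assume x: "x \<in> carrier N" and y: "y \<in> carrier N"
  show "pj j (x \<oplus>\<^bsub>N\<^esub> y) = pj j x \<oplus>\<^bsub>N\<^esub> pj j y"
  proof -
    have "pj j (x \<oplus>\<^bsub>N\<^esub> y) = (\<lambda>z\<in>Om. (x \<oplus>\<^bsub>N\<^esub> y) (g (j, z)))"
      using add_closed_N[OF x y] by (simp add: pj_def)
    also have "\<dots> = (\<lambda>z\<in>Om. x (g (j, z)) \<oplus>\<^bsub>M\<^esub> y (g (j, z)))"
      by (rule restrict_ext) (simp add: add_eq g_in j)
    also have "\<dots> = pj j x \<oplus>\<^bsub>N\<^esub> pj j y"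
      unfolding add_eq by (rule restrict_ext) (simp add: pj_def x y)
    finally show ?thesis .
  qed
next
  assume j: "j \<in> I"
  fix r x assume r: "r \<in> carrier R" and x: "x \<in> carrier N"
  show "pj j (r \<odot>\<^bsub>N\<^esub> x) = r \<odot>\<^bsub>N\<^esub> pj j x"
  proof -
    have "pj j (r \<odot>\<^bsub>N\<^esub> x) = (\<lambda>z\<in>Om. (r \<odot>\<^bsub>N\<^esub> x) (g (j, z)))"
      using smult_closed_N[OF r x] by (simp add: pj_def)
    also have "\<dots> = (\<lambda>z\<in>Om. r \<odot>\<^bsub>M\<^esub> x (g (j, z)))"
      by (rule restrict_ext) (simp add: smult_eq g_in j)
    also have "\<dots> = r \<odot>\<^bsub>N\<^esub> pj j x"
      unfolding smult_eq by (rule restrict_ext) (simp add: pj_def x)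
    finally show ?thesis .
  qed
qed

lemma qj_val: "j \<in> I \<Longrightarrow> z \<in> Om \<Longrightarrow> v \<in> carrier N \<Longrightarrow> qj j v (g (j, z)) = v z"
  using inv_g g_in by (auto simp: qj_def)

lemma qj_val0: "x \<in> Om \<Longrightarrow> x \<notin> g ` ({j} \<times> Om) \<Longrightarrow> v \<in> carrier N \<Longrightarrow> qj j v x = \<zero>\<^bsub>M\<^esub>"
  by (simp add: qj_def)

lemma qj_ext: "v \<in> carrier N \<Longrightarrow> x \<notin> Om \<Longrightarrow> qj j v x = undefined"
  by (simp add: qj_def)

lemma qj_closed: "j \<in> I \<Longrightarrow> v \<in> carrier N \<Longrightarrow> qj j v \<in> carrier N"
proof (rule Nc_intro)
  assume j: "j \<in> I" and v: "v \<in> carrier N"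
  show "qj j v \<in> extensional Om" using qj_ext[OF v] by (auto simp: extensional_def)
  fix x assume x: "x \<in> Om"
  show "qj j v x \<in> carrier M"
  proof (cases "x \<in> g ` ({j} \<times> Om)")
    case True
    then obtain z where z: "z \<in> Om" "x = g (j, z)" by auto
    then show ?thesis using qj_val[OF j z(1) v] Nc_fun[OF v] by simp
  next
    case False then show ?thesis using qj_val0[OF x False v] by simp
  qed
next
  assume j: "j \<in> I" and v: "v \<in> carrier N" and fin
  have "{x\<in>Om. qj j v x \<noteq> \<zero>\<^bsub>M\<^esub>} \<subseteq> (\<lambda>z. g (j, z)) ` {i\<in>Om. v i \<noteq> \<zero>\<^bsub>M\<^esub>}"
  proof
    fix x assume "x \<in> {x\<in>Om. qj j v x \<noteq> \<zero>\<^bsub>M\<^esub>}"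
    then have x: "x \<in> Om" "qj j v x \<noteq> \<zero>\<^bsub>M\<^esub>" by auto
    show "x \<in> (\<lambda>z. g (j, z)) ` {i\<in>Om. v i \<noteq> \<zero>\<^bsub>M\<^esub>}"
    proof (cases "x \<in> g ` ({j} \<times> Om)")
      case True
      then obtain z where z: "z \<in> Om" "x = g (j, z)" by auto
      then show ?thesis using qj_val[OF j z(1) v] x by auto
    next
      case False then show ?thesis using qj_val0[OF x(1) False v] x by simp
    qed
  qed
  then show "finite {x\<in>Om. qj j v x \<noteq> \<zero>\<^bsub>M\<^esub>}"
    using Nc_fin[OF v \<open>fin\<close>] finite_surj by blast
qed

lemma qj_endo: "j \<in> I \<Longrightarrow> qj j \<in> module_endos R N"
  unfolding module_endos_def
proof (intro CollectI conjI ballI)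
  assume j: "j \<in> I"
  show "qj j \<in> carrier N \<rightarrow>\<^sub>E carrier N" using qj_closed[OF j] by (auto simp: qj_def)
  fix x y assume x: "x \<in> carrier N" and y: "y \<in> carrier N"
  have xy: "x \<oplus>\<^bsub>N\<^esub> y \<in> carrier N" using add_closed_N[OF x y] .
  have pt: "qj j (x \<oplus>\<^bsub>N\<^esub> y) w = qj j x w \<oplus>\<^bsub>M\<^esub> qj j y w" if w: "w \<in> Om" for w
  proof (cases "w \<in> g ` ({j} \<times> Om)")
    case True
    then obtain z where z: "z \<in> Om" "w = g (j, z)" by auto
    then show ?thesis using qj_val[OF j z(1) xy] qj_val[OF j z(1) x] qj_val[OF j z(1) y]
      by (simp add: add_eq)
  next
    case False then show ?thesis
      using qj_val0[OF w False xy] qj_val0[OF w False x] qj_val0[OF w False y] by simp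
  qed
  show "qj j (x \<oplus>\<^bsub>N\<^esub> y) = qj j x \<oplus>\<^bsub>N\<^esub> qj j y"
  proof (rule ext)
    fix i show "qj j (x \<oplus>\<^bsub>N\<^esub> y) i = (qj j x \<oplus>\<^bsub>N\<^esub> qj j y) i"
      using pt[of i] qj_ext[OF xy, of i] by (cases "i \<in> Om") (simp_all add: add_eq)
  qed
next
  assume j: "j \<in> I"
  fix r x assume r: "r \<in> carrier R" and x: "x \<in> carrier N"
  have rx: "r \<odot>\<^bsub>N\<^esub> x \<in> carrier N" using smult_closed_N[OF r x] .
  have pt: "qj j (r \<odot>\<^bsub>N\<^esub> x) w = r \<odot>\<^bsub>M\<^esub> qj j x w" if w: "w \<in> Om" for w
  proof (cases "w \<in> g ` ({j} \<times> Om)")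
    case True
    then obtain z where z: "z \<in> Om" "w = g (j, z)" by auto
    then show ?thesis using qj_val[OF j z(1) rx] qj_val[OF j z(1) x]
      by (simp add: smult_eq)
  next
    case False then show ?thesis
      using qj_val0[OF w False rx] qj_val0[OF w False x] smult_zero[OF r] by simp
  qed
  show "qj j (r \<odot>\<^bsub>N\<^esub> x) = r \<odot>\<^bsub>N\<^esub> qj j x"
  proof (rule ext)
    fix i show "qj j (r \<odot>\<^bsub>N\<^esub> x) i = (r \<odot>\<^bsub>N\<^esub> qj j x) i"
      using pt[of i] qj_ext[OF rx, of i] by (cases "i \<in> Om") (simp_all add: smult_eq)
  qed
qed


lemma Dg_val: "j \<in> I \<Longrightarrow> z \<in> Om \<Longrightarrow> v \<in> carrier N \<Longrightarrow> Dg y v (g (j, z)) = y j (pj j v) z"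
  using inv_g g_in by (auto simp: Dg_def)

lemma Dg_val0: "x \<in> Om \<Longrightarrow> x \<notin> g ` (I \<times> Om) \<Longrightarrow> v \<in> carrier N \<Longrightarrow> Dg y v x = \<zero>\<^bsub>M\<^esub>"
  by (simp add: Dg_def)

lemma Dg_ext: "v \<in> carrier N \<Longrightarrow> x \<notin> Om \<Longrightarrow> Dg y v x = undefined"
  by (simp add: Dg_def)

lemma endo_closed: "\<phi> \<in> module_endos R N \<Longrightarrow> w \<in> carrier N \<Longrightarrow> \<phi> w \<in> carrier N"
  unfolding module_endos_def by blast
lemma endo_add: "\<phi> \<in> module_endos R N \<Longrightarrow> x \<in> carrier N \<Longrightarrow> y \<in> carrier N \<Longrightarrow>
    \<phi> (x \<oplus>\<^bsub>N\<^esub> y) = \<phi> x \<oplus>\<^bsub>N\<^esub> \<phi> y"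
  unfolding module_endos_def by blast
lemma endo_smult: "\<phi> \<in> module_endos R N \<Longrightarrow> r \<in> carrier R \<Longrightarrow> x \<in> carrier N \<Longrightarrow>
    \<phi> (r \<odot>\<^bsub>N\<^esub> x) = r \<odot>\<^bsub>N\<^esub> \<phi> x"
  unfolding module_endos_def by blast
lemma endo_ext: "\<phi> \<in> module_endos R N \<Longrightarrow> w \<notin> carrier N \<Longrightarrow> \<phi> w = undefined"
  unfolding module_endos_def by blast

lemma Dg_closed:
  assumes Y: "\<And>j. j \<in> I \<Longrightarrow> y j \<in> module_endos R N" and v: "v \<in> carrier N"
  shows "Dg y v \<in> carrier N"
proof (rule Nc_intro)
  show "Dg y v \<in> extensional Om" using Dg_ext[OF v] by (auto simp: extensional_def)
  fix x assume x: "x \<in> Om"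
  show "Dg y v x \<in> carrier M"
  proof (cases "x \<in> g ` (I \<times> Om)")
    case True
    then obtain j z where jz: "j \<in> I" "z \<in> Om" "x = g (j, z)" by auto
    then show ?thesis using Dg_val[OF jz(1,2) v]
      Nc_fun[OF endo_closed[OF Y[OF jz(1)] pj_closed[OF jz(1) v]] jz(2)] by simp
  next
    case False then show ?thesis using Dg_val0[OF x False v] by simp
  qed
next
  assume fin
  define S where "S = {i\<in>Om. v i \<noteq> \<zero>\<^bsub>M\<^esub>}"
  define J where "J = fst ` (the_inv_into (I \<times> Om) g ` S)"
  define T where "T = (\<Union>j\<in>J \<inter> I. {j} \<times> {z\<in>Om. y j (pj j v) z \<noteq> \<zero>\<^bsub>M\<^esub>})"
  have "finite S" using Nc_fin[OF v \<open>fin\<close>] by (simp add: S_def)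
  then have "finite J" by (simp add: J_def)
  then have fT: "finite T" unfolding T_def
    using Nc_fin[OF endo_closed[OF Y pj_closed[OF _ v]] \<open>fin\<close>] by blast
  have pz: "pj j v = zero N" if j: "j \<in> I" "j \<notin> J" for j
  proof (rule ext)
    fix z show "pj j v z = zero N z"
    proof (cases "z \<in> Om")
      case True
      have "v (g (j, z)) = \<zero>\<^bsub>M\<^esub>"
      proof (rule ccontr)
        assume "v (g (j, z)) \<noteq> \<zero>\<^bsub>M\<^esub>"
        then have "g (j, z) \<in> S" using g_in[OF j(1) True] by (simp add: S_def)
        then have "fst (the_inv_into (I \<times> Om) g (g (j, z))) \<in> J" unfolding J_def by blast
        then show False using inv_g[OF j(1) True] j(2) by simp
      qed
      then show ?thesis using True by (simp add: pj_app[OF v] N_zero)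
    next
      case False then show ?thesis by (simp add: pj_app[OF v] N_zero)
    qed
  qed
  have "{x\<in>Om. Dg y v x \<noteq> \<zero>\<^bsub>M\<^esub>} \<subseteq> g ` T"
  proof
    fix x assume "x \<in> {x\<in>Om. Dg y v x \<noteq> \<zero>\<^bsub>M\<^esub>}"
    then have x: "x \<in> Om" "Dg y v x \<noteq> \<zero>\<^bsub>M\<^esub>" by auto
    show "x \<in> g ` T"
    proof (cases "x \<in> g ` (I \<times> Om)")
      case True
      then obtain j z where jz: "j \<in> I" "z \<in> Om" "x = g (j, z)" by auto
      have nz: "y j (pj j v) z \<noteq> \<zero>\<^bsub>M\<^esub>" using x Dg_val[OF jz(1,2) v] jz(3) by simp
      have "j \<in> J"
      proof (rule ccontr)
        assume "j \<notin> J"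
        then have "y j (pj j v) = zero N" using pz[OF jz(1)] endo_zero[OF Y[OF jz(1)]] by simp
        then show False using nz jz(2) by (simp add: N_zero)
      qed
      then have "(j, z) \<in> T" using jz nz by (auto simp: T_def)
      then show ?thesis using jz(3) by blast
    next
      case False then show ?thesis using Dg_val0[OF x(1) False v] x by simp
    qed
  qed
  then show "finite {x\<in>Om. Dg y v x \<noteq> \<zero>\<^bsub>M\<^esub>}" using fT finite_surj by blast
qed

lemma Dg_endo:
  assumes Y: "\<And>j. j \<in> I \<Longrightarrow> y j \<in> module_endos R N"
  shows "Dg y \<in> module_endos R N"
  unfolding module_endos_def
proof (intro CollectI conjI ballI)
  show "Dg y \<in> carrier N \<rightarrow>\<^sub>E carrier N" using Dg_closed[OF Y] by (auto simp: Dg_def)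
  fix a b assume a: "a \<in> carrier N" and b: "b \<in> carrier N"
  have ab: "a \<oplus>\<^bsub>N\<^esub> b \<in> carrier N" using add_closed_N[OF a b] .
  have pt: "Dg y (a \<oplus>\<^bsub>N\<^esub> b) w = Dg y a w \<oplus>\<^bsub>M\<^esub> Dg y b w" if w: "w \<in> Om" for w
  proof (cases "w \<in> g ` (I \<times> Om)")
    case True
    then obtain j z where jz: "j \<in> I" "z \<in> Om" "w = g (j, z)" by auto
    have "y j (pj j (a \<oplus>\<^bsub>N\<^esub> b)) = y j (pj j a) \<oplus>\<^bsub>N\<^esub> y j (pj j b)"
      using endo_add[OF pj_endo[OF jz(1)] a b] endo_add[OF Y[OF jz(1)] pj_closed[OF jz(1) a] pj_closed[OF jz(1) b]]
      by simp
    then show ?thesis using Dg_val[OF jz(1,2) ab] Dg_val[OF jz(1,2) a] Dg_val[OF jz(1,2) b] jz(2,3)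
      by (simp add: add_eq)
  next
    case False then show ?thesis
      using Dg_val0[OF w False ab] Dg_val0[OF w False a] Dg_val0[OF w False b] by simp
  qed
  show "Dg y (a \<oplus>\<^bsub>N\<^esub> b) = Dg y a \<oplus>\<^bsub>N\<^esub> Dg y b"
  proof (rule ext)
    fix i show "Dg y (a \<oplus>\<^bsub>N\<^esub> b) i = (Dg y a \<oplus>\<^bsub>N\<^esub> Dg y b) i"
      using pt[of i] Dg_ext[OF ab, of i] by (cases "i \<in> Om") (simp_all add: add_eq)
  qed
next
  fix r a assume r: "r \<in> carrier R" and a: "a \<in> carrier N"
  have ra: "r \<odot>\<^bsub>N\<^esub> a \<in> carrier N" using smult_closed_N[OF r a] .
  have pt: "Dg y (r \<odot>\<^bsub>N\<^esub> a) w = r \<odot>\<^bsub>M\<^esub> Dg y a w" if w: "w \<in> Om" for w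
  proof (cases "w \<in> g ` (I \<times> Om)")
    case True
    then obtain j z where jz: "j \<in> I" "z \<in> Om" "w = g (j, z)" by auto
    have "y j (pj j (r \<odot>\<^bsub>N\<^esub> a)) = r \<odot>\<^bsub>N\<^esub> y j (pj j a)"
      using endo_smult[OF pj_endo[OF jz(1)] r a] endo_smult[OF Y[OF jz(1)] r pj_closed[OF jz(1) a]]
      by simp
    then show ?thesis using Dg_val[OF jz(1,2) ra] Dg_val[OF jz(1,2) a] jz(2,3)
      by (simp add: smult_eq)
  next
    case False then show ?thesis
      using Dg_val0[OF w False ra] Dg_val0[OF w False a] smult_zero[OF r] by simp
  qed
  show "Dg y (r \<odot>\<^bsub>N\<^esub> a) = r \<odot>\<^bsub>N\<^esub> Dg y a"
  proof (rule ext)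
    fix i show "Dg y (r \<odot>\<^bsub>N\<^esub> a) i = (r \<odot>\<^bsub>N\<^esub> Dg y a) i"
      using pt[of i] Dg_ext[OF ra, of i] by (cases "i \<in> Om") (simp_all add: smult_eq)
  qed
qed

lemma pj_qj: "j \<in> I \<Longrightarrow> v \<in> carrier N \<Longrightarrow> pj j (qj j v) = v"
proof (rule ext)
  fix z assume j: "j \<in> I" and v: "v \<in> carrier N"
  show "pj j (qj j v) z = v z"
    using qj_val[OF j _ v, of z] Nc_ext[OF v, of z]
    by (cases "z \<in> Om") (simp_all add: pj_app[OF qj_closed[OF j v]])
qed

lemma main_eq:
  assumes Y: "\<And>j. j \<in> I \<Longrightarrow> y j \<in> module_endos R N" and j: "j \<in> I"
  shows "compose (carrier N) (compose (carrier N) (pj j) (Dg y)) (qj j) = y j"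
proof (rule ext)
  fix v show "compose (carrier N) (compose (carrier N) (pj j) (Dg y)) (qj j) v = y j v"
  proof (cases "v \<in> carrier N")
    case True
    have q: "qj j v \<in> carrier N" using qj_closed[OF j True] .
    have d: "Dg y (qj j v) \<in> carrier N" using Dg_closed[OF Y q] .
    have "compose (carrier N) (compose (carrier N) (pj j) (Dg y)) (qj j) v = pj j (Dg y (qj j v))"
      using True q by (simp add: compose_def)
    also have "\<dots> = (\<lambda>z\<in>Om. Dg y (qj j v) (g (j, z)))" using pj_app[OF d] .
    also have "\<dots> = (\<lambda>z\<in>Om. y j v z)"
      by (rule restrict_ext) (simp add: Dg_val[OF j _ q] pj_qj[OF j True])
    also have "\<dots> = y j v"
    proof (rule ext)
      fix z show "(\<lambda>z\<in>Om. y j v z) z = y j v z"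
        using Nc_ext[OF endo_closed[OF Y[OF j] True], of z] by simp
    qed
    finally show ?thesis .
  next
    case False then show ?thesis using endo_ext[OF Y[OF j] False] by (simp add: compose_def)
  qed
qed


lemma chain2: "\<forall>i\<in>I. \<forall>j\<in>I. (S :: 'j \<Rightarrow> 'x set) i \<subseteq> S j \<or> S j \<subseteq> S i \<Longrightarrow> a \<in> I \<Longrightarrow> b \<in> I \<Longrightarrow>
   \<exists>k\<in>I. S a \<subseteq> S k \<and> S b \<subseteq> S k"
  by blast

lemma conclusion:
  fixes S :: "'j \<Rightarrow> (('o \<Rightarrow> 'm) \<Rightarrow> ('o \<Rightarrow> 'm)) set"
  assumes sub: "\<forall>i\<in>I. subring (S i) (End_ring R N)"
    and ch: "\<forall>i\<in>I. \<forall>j\<in>I. S i \<subseteq> S j \<or> S j \<subseteq> S i"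
    and un: "(\<Union>i\<in>I. S i) = carrier (End_ring R N)"
  shows "\<exists>i\<in>I. S i = carrier (End_ring R N)"
proof -
  have cE: "carrier (End_ring R N) = module_endos R N" by (simp add: End_ring_def)
  have mE: "\<And>a b. a \<otimes>\<^bsub>End_ring R N\<^esub> b = compose (carrier N) a b" by (simp add: End_ring_def)
  have "\<exists>j\<in>I. \<forall>y\<in>module_endos R N. \<exists>z\<in>S j.
      y = compose (carrier N) (compose (carrier N) (pj j) z) (qj j)"
  proof (rule ccontr)
    assume "\<not> ?thesis"
    then have "\<forall>j\<in>I. \<exists>y. y \<in> module_endos R N \<and> (\<forall>z\<in>S j.
      y \<noteq> compose (carrier N) (compose (carrier N) (pj j) z) (qj j))" by blast
    then obtain Y where Y: "\<And>j. j \<in> I \<Longrightarrow> Y j \<in> module_endos R N"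
      and Yn: "\<And>j z. j \<in> I \<Longrightarrow> z \<in> S j \<Longrightarrow> Y j \<noteq> compose (carrier N) (compose (carrier N) (pj j) z) (qj j)"
      by metis
    have "Dg Y \<in> carrier (End_ring R N)" using Dg_endo[OF Y] cE by simp
    then obtain i where i: "i \<in> I" "Dg Y \<in> S i" using un by blast
    show False using Yn[OF i] main_eq[OF Y i(1)] by simp
  qed
  then obtain j where j: "j \<in> I" and jall: "\<And>y. y \<in> module_endos R N \<Longrightarrow> \<exists>z\<in>S j.
      y = compose (carrier N) (compose (carrier N) (pj j) z) (qj j)" by blast
  obtain a where a: "a \<in> I" "pj j \<in> S a" using un pj_endo[OF j] cE by blast
  obtain b where b: "b \<in> I" "qj j \<in> S b" using un qj_endo[OF j] cE by blast
  obtain k1 where k1: "k1 \<in> I" "S j \<subseteq> S k1" "S a \<subseteq> S k1" using chain2[OF ch j a(1)] by blast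
  obtain k where k: "k \<in> I" "S k1 \<subseteq> S k" "S b \<subseteq> S k" using chain2[OF ch k1(1) b(1)] by blast
  have sm: "submonoid (S k) (End_ring R N)" using sub k(1) subring.axioms(2) by blast
  have "module_endos R N \<subseteq> S k"
  proof
    fix y assume "y \<in> module_endos R N"
    then obtain z where z: "z \<in> S j" "y = compose (carrier N) (compose (carrier N) (pj j) z) (qj j)"
      using jall by blast
    have "pj j \<in> S k" "z \<in> S k" "qj j \<in> S k" using a b z k k1 by auto
    then have "(pj j \<otimes>\<^bsub>End_ring R N\<^esub> z) \<otimes>\<^bsub>End_ring R N\<^esub> qj j \<in> S k"
      using submonoid.m_closed[OF sm] by blast
    then show "y \<in> S k" using z(2) mE by simp
  qed
  moreover have "S k \<subseteq> module_endos R N" using submonoid.subset[OF sm] cE by simp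
  ultimately show ?thesis using k(1) cE by blast
qed

end

lemma inf_sq: "\<not>finite A \<Longrightarrow> \<exists>f. bij_betw f (A \<times> A) A"
  using card_of_Times_same_infinite by (auto simp: card_of_ordIso)

theorem theorem3:
  fixes R :: "('r, 'e) ring_scheme"
    and M :: "('r, 'm) module"
    and \<Omega> :: "'o set"
    and E :: "(('o \<Rightarrow> 'm) \<Rightarrow> ('o \<Rightarrow> 'm)) ring"
    and I :: "'j set"
    and S :: "'j \<Rightarrow> (('o \<Rightarrow> 'm) \<Rightarrow> ('o \<Rightarrow> 'm)) set"
  assumes "left_module R M"
    and "carrier M \<noteq> {\<zero>\<^bsub>M\<^esub>}"
    and "infinite \<Omega>"
    and "E = End_ring R (direct_sum_mod \<Omega> M) \<or> E = End_ring R (direct_prod_mod \<Omega> M)"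
    and "\<forall>i\<in>I. subring (S i) E"
    and "\<forall>i\<in>I. \<forall>j\<in>I. S i \<subseteq> S j \<or> S j \<subseteq> S i"
    and "(\<Union>i\<in>I. S i) = carrier E"
    and "\<exists>f. inj_on f I \<and> f ` I \<subseteq> \<Omega>"
  shows "\<exists>i\<in>I. S i = carrier E"
proof -
  obtain f where f: "inj_on f I" "f ` I \<subseteq> \<Omega>" using assms(8) by blast
  obtain h where h: "bij_betw h (\<Omega> \<times> \<Omega>) \<Omega>"
    using inf_sq[OF assms(3)] by blast
  define g where "g = (\<lambda>(j, z). h (f j, z))"
  have ginj: "inj_on g (I \<times> \<Omega>)"
  proof (rule inj_onI)
    fix p q assume p: "p \<in> I \<times> \<Omega>" and q: "q \<in> I \<times> \<Omega>" and e: "g p = g q"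
    have "(f (fst p), snd p) \<in> \<Omega> \<times> \<Omega>" "(f (fst q), snd q) \<in> \<Omega> \<times> \<Omega>" using p q f(2) by auto
    moreover have "h (f (fst p), snd p) = h (f (fst q), snd q)" using e by (auto simp: g_def split: prod.splits)
    ultimately have "(f (fst p), snd p) = (f (fst q), snd q)"
      using h bij_betw_imp_inj_on inj_onD by metis
    then show "p = q" using f(1) p q by (auto simp: inj_on_def prod_eq_iff)
  qed
  have ginto: "g ` (I \<times> \<Omega>) \<subseteq> \<Omega>"
    using h f(2) by (auto simp: g_def bij_betw_def)
  show ?thesis
    using assms(4)
  proof
    assume E: "E = End_ring R (direct_sum_mod \<Omega> M)"
    interpret blk R M \<Omega> I g True "direct_sum_mod \<Omega> M"
      by (rule blk.intro[OF assms(1)], unfold_locales) (auto simp: ginj ginto direct_sum_mod_def)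
    show ?thesis using conclusion[of S] assms(5,6,7) E by simp
  next
    assume E: "E = End_ring R (direct_prod_mod \<Omega> M)"
    interpret blk R M \<Omega> I g False "direct_prod_mod \<Omega> M"
      by (rule blk.intro[OF assms(1)], unfold_locales) (auto simp: ginj ginto direct_prod_mod_def)
    show ?thesis using conclusion[of S] assms(5,6,7) E by simp
  qed
qed

end
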